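(* In the monoid $\Pi_2=\langle a,b,c\mid (ab^ic)^2=1\ (i\geq 1)\rangle$, for every $i\geq 1$ the factorisation of the word $(ab^ic)^2$ into minimal invertible factors is $(ab^ic)(ab^ic)$; that is, $ab^ic$ is a minimal invertible word in $\Pi_2$.
   Context: A word $w$ over $\{a,b,c\}$ is invertible in a monoid $M$ if the element it represents is a unit (has both a left and a right inverse). A non-empty invertible word is minimal (a minimal invertible factor) if none of its non-empty proper prefixes is invertible in $M$ (equivalently, none of its non-empty proper suffixes is invertible). Every invertible word factors uniquely as a product of minimal invertible words. *)

theory Defs
  imports Main
begin

datatype letter = a | b | c

type_synonym word = "letter list"

definition abic :: "nat \<Rightarrow> word" where
  "abic i = [a] @ replicate i b @ [c]"

inductive pi2_eq :: "word \<Rightarrow> word \<Rightarrow> bool" where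
  rel: "i \<ge> 1 \<Longrightarrow> pi2_eq (abic i @ abic i) []"
| refl: "pi2_eq u u"
| sym: "pi2_eq u v \<Longrightarrow> pi2_eq v u"
| trans: "pi2_eq u v \<Longrightarrow> pi2_eq v w \<Longrightarrow> pi2_eq u w"
| ctxt: "pi2_eq u v \<Longrightarrow> pi2_eq (x @ u @ y) (x @ v @ y)"

definition invertible :: "word \<Rightarrow> bool" where
  "invertible w \<longleftrightarrow> (\<exists>u. pi2_eq (u @ w) []) \<and> (\<exists>v. pi2_eq (w @ v) [])"

definition minimal_invertible :: "word \<Rightarrow> bool" where
  "minimal_invertible w \<longleftrightarrow> w \<noteq> [] \<and> invertible w \<and>
     (\<forall>p s. w = p @ s \<and> p \<noteq> [] \<and> s \<noteq> [] \<longrightarrow> \<not> invertible p)"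

end

theory Submission
  imports Defs
begin

fun act :: "letter \<Rightarrow> nat \<Rightarrow> nat" where
  "act a = Suc" | "act b = id" | "act c = (\<lambda>n. n - 1)"

fun ev :: "word \<Rightarrow> nat \<Rightarrow> nat" where
  "ev [] = id" | "ev (x # w) = ev w \<circ> act x"

lemma ev_app: "ev (u @ v) = ev v \<circ> ev u"
  by (induction u) auto

lemma ev_rep_b: "ev (replicate k b) = id"
  by (induction k) auto

lemma ev_abic: "ev (abic i) = id"
  by (auto simp: abic_def ev_app ev_rep_b)

lemma ev_eq: "pi2_eq u v \<Longrightarrow> ev u = ev v"
  by (induction rule: pi2_eq.induct) (auto simp: ev_app ev_abic)

lemma not_inv: assumes "ev w = Suc" shows "\<not> invertible w"
proof
  assume "invertible w"
  then obtain u where "pi2_eq (u @ w) []" unfolding invertible_def by blast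
  then have "ev w \<circ> ev u = id" using ev_eq ev_app by fastforce
  then have "ev w (ev u 0) = 0" by (metis comp_apply id_apply)
  with assms show False by simp
qed

lemma inv_abic: "i \<ge> 1 \<Longrightarrow> invertible (abic i)"
  unfolding invertible_def using pi2_eq.rel by blast

lemma take_abic: "1 \<le> n \<Longrightarrow> n \<le> Suc i \<Longrightarrow> take n (abic i) = a # replicate (n - 1) b"
  by (cases n) (auto simp: abic_def)

lemma ev_ab: "ev (a # replicate k b) = Suc"
  by (simp add: ev_rep_b)

lemma len_abic: "length (abic i) = i + 2"
  by (simp add: abic_def)

lemma prefix_not_inv:
  assumes "abic i @ t = p @ s" "p \<noteq> []" "length p < length (abic i)"
  shows "\<not> invertible p"
proof -
  have "p = take (length p) (abic i)" using assms(1,3)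
    by (metis append_eq_conv_conj take_all_iff take_append less_or_eq_imp_le take_take order.strict_implies_order)
  also have "\<dots> = a # replicate (length p - 1) b"
    using assms(2,3) by (intro take_abic) (auto simp: len_abic Suc_le_eq)
  finally show ?thesis using not_inv ev_ab by metis
qed

lemma first_factor:
  assumes "i \<ge> 1" "abic i @ t = f @ r" "minimal_invertible f"
  shows "f = abic i \<and> r = t"
proof -
  have f: "f \<noteq> []" "invertible f"
    "\<And>p s. f = p @ s \<Longrightarrow> p \<noteq> [] \<Longrightarrow> s \<noteq> [] \<Longrightarrow> \<not> invertible p"
    using assms(3) unfolding minimal_invertible_def by blast+
  have "\<not> length f < length (abic i)"
    using prefix_not_inv[OF assms(2) f(1)] f(2) by blast
  moreover have "\<not> length f > length (abic i)"
  proof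
    assume L: "length f > length (abic i)"
    then have "f = abic i @ drop (length (abic i)) f" using assms(2)
      by (metis append_eq_append_conv_if append_take_drop_id less_or_eq_imp_le take_append take_all_iff order.strict_implies_order append_eq_conv_conj)
    moreover have "drop (length (abic i)) f \<noteq> []" using L by simp
    moreover have "abic i \<noteq> []" by (simp add: abic_def)
    ultimately show False using f(3) inv_abic[OF assms(1)] by blast
  qed
  ultimately have "length f = length (abic i)" by simp
  then show ?thesis using assms(2) by (metis append_eq_append_conv)
qed

theorem mainTheorem4:
  fixes i :: nat
  assumes "i \<ge> 1"
  shows "minimal_invertible (abic i) \<and>
         (\<forall>fs. concat fs = abic i @ abic i \<and> (\<forall>f\<in>set fs. minimal_invertible f)
                \<longrightarrow> fs = [abic i, abic i])"
proof
  show mi: "minimal_invertible (abic i)"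
    unfolding minimal_invertible_def
  proof (intro conjI allI impI)
    show "abic i \<noteq> []" by (simp add: abic_def)
    show "invertible (abic i)" using inv_abic assms .
    fix p s assume h: "abic i = p @ s \<and> p \<noteq> [] \<and> s \<noteq> []"
    then have "abic i @ [] = p @ s" "length p < length (abic i)" by auto
    then show "\<not> invertible p" using prefix_not_inv h by blast
  qed
  show "\<forall>fs. concat fs = abic i @ abic i \<and> (\<forall>f\<in>set fs. minimal_invertible f)
                \<longrightarrow> fs = [abic i, abic i]"
  proof (intro allI impI)
    fix fs assume h: "concat fs = abic i @ abic i \<and> (\<forall>f\<in>set fs. minimal_invertible f)"
    have ne: "abic i \<noteq> []" by (simp add: abic_def)
    obtain f1 fs1 where fs: "fs = f1 # fs1" using h ne by (cases fs) auto
    have 1: "f1 = abic i \<and> concat fs1 = abic i"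
      using first_factor[OF assms, of "abic i" f1 "concat fs1"] h fs by auto
    obtain f2 fs2 where fs1: "fs1 = f2 # fs2" using 1 ne by (cases fs1) auto
    have 2: "f2 = abic i \<and> concat fs2 = []"
      using first_factor[OF assms, of "[]" f2 "concat fs2"] h fs fs1 1 by fastforce
    have "fs2 = []"
    proof (cases fs2)
      case (Cons g gs)
      then have "minimal_invertible g" using h fs fs1 by auto
      then have "g \<noteq> []" by (simp add: minimal_invertible_def)
      then show ?thesis using 2 Cons by simp
    qed simp
    then show "fs = [abic i, abic i]" using fs fs1 1 2 by simp
  qed
qed

end
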